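(* For all $a,b>0$, $$H(a,b)\le\lambda_{-1}(a,b)\le G(a,b)\le\lambda_0(a,b)\le L(a,b)\le\lambda_1(a,b)\le I(a,b).$$
   Context: For $a,b>0$ with $a\neq b$ define $$\lambda_{-1}(a,b)=\dfrac{2\log\frac{a+b}{2}-\log a-\log b}{\frac{1}{2a}+\frac{1}{2b}-\frac{2}{a+b}},\quad \lambda_0(a,b)=\dfrac{a\log a+b\log b-(a+b)\log\frac{a+b}{2}}{2\log\frac{a+b}{2}-\log a-\log b},$$ $$\lambda_1(a,b)=\dfrac{(b-a)^2}{4\left(a\log a+b\log b-(a+b)\log\frac{a+b}{2}\right)},$$ and $\lambda_s(a,a)=a$. Here $H(a,b)=2(1/a+1/b)^{-1}$, $G(a,b)=\sqrt{ab}$, $L(a,b)=\frac{b-a}{\log b-\log a}$, $I(a,b)=\frac1e(b^b/a^a)^{1/(b-a)}$ for $a\neq b$, with $L(a,a)=I(a,a)=a$. *)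

theory Defs
  imports Complex_Main
begin

definition lam_m1 :: "real \<Rightarrow> real \<Rightarrow> real" where
  "lam_m1 a b = (if a = b then a else
     (2 * ln ((a + b) / 2) - ln a - ln b) / (1 / (2 * a) + 1 / (2 * b) - 2 / (a + b)))"

definition lam_0 :: "real \<Rightarrow> real \<Rightarrow> real" where
  "lam_0 a b = (if a = b then a else
     (a * ln a + b * ln b - (a + b) * ln ((a + b) / 2)) / (2 * ln ((a + b) / 2) - ln a - ln b))"

definition lam_1 :: "real \<Rightarrow> real \<Rightarrow> real" where
  "lam_1 a b = (if a = b then a else
     (b - a)^2 / (4 * (a * ln a + b * ln b - (a + b) * ln ((a + b) / 2))))"

definition harm_mean :: "real \<Rightarrow> real \<Rightarrow> real" where
  "harm_mean a b = 2 * inverse (1 / a + 1 / b)"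

definition geom_mean :: "real \<Rightarrow> real \<Rightarrow> real" where
  "geom_mean a b = sqrt (a * b)"

definition log_mean :: "real \<Rightarrow> real \<Rightarrow> real" where
  "log_mean a b = (if a = b then a else (b - a) / (ln b - ln a))"

definition ident_mean :: "real \<Rightarrow> real \<Rightarrow> real" where
  "ident_mean a b = (if a = b then a else
     (1 / exp 1) * ((b powr b) / (a powr a)) powr (1 / (b - a)))"

end

theory Submission
  imports Defs
begin


lemma mono_deriv:
  fixes f f' :: "real \<Rightarrow> real"
  assumes "c \<le> x"
    and "\<And>y. c \<le> y \<Longrightarrow> y \<le> x \<Longrightarrow> (f has_real_derivative f' y) (at y)"
    and "\<And>y. c \<le> y \<Longrightarrow> y \<le> x \<Longrightarrow> 0 \<le> f' y"
  shows "f c \<le> f x"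
  using assms by (intro DERIV_nonneg_imp_nondecreasing[OF assms(1)]) blast

definition ell :: "real \<Rightarrow> real" where "ell x = ln (1+x) - ln (1-x)"
definition PP :: "real \<Rightarrow> real" where "PP x = - ln (1+x) - ln (1-x)"
definition QQ :: "real \<Rightarrow> real" where "QQ x = x * ell x - PP x"

lemma ell_deriv: "\<bar>y\<bar> < 1 \<Longrightarrow> (ell has_real_derivative 2/(1-y^2)) (at y)"
  unfolding ell_def
  by (auto intro!: derivative_eq_intros simp: field_simps power2_eq_square)

lemma PP_deriv: "\<bar>y\<bar> < 1 \<Longrightarrow> (PP has_real_derivative 2*y/(1-y^2)) (at y)"
  unfolding PP_def
  by (auto intro!: derivative_eq_intros simp: field_simps power2_eq_square)

lemma QQ_deriv: "\<bar>y\<bar> < 1 \<Longrightarrow> (QQ has_real_derivative ell y) (at y)"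
  unfolding QQ_def
  by (auto intro!: derivative_eq_intros ell_deriv PP_deriv simp: field_simps power2_eq_square)

lemma ell_deriv_chain[derivative_intros]:
  "(g has_real_derivative g') (at y within S) \<Longrightarrow> \<bar>g y\<bar> < 1 \<Longrightarrow>
   ((\<lambda>x. ell (g x)) has_real_derivative (2/(1-(g y)^2)) * g') (at y within S)"
  using DERIV_chain2[OF ell_deriv] by blast
lemma PP_deriv_chain[derivative_intros]:
  "(g has_real_derivative g') (at y within S) \<Longrightarrow> \<bar>g y\<bar> < 1 \<Longrightarrow>
   ((\<lambda>x. PP (g x)) has_real_derivative (2*g y/(1-(g y)^2)) * g') (at y within S)"
  using DERIV_chain2[OF PP_deriv] by blast
lemma QQ_deriv_chain[derivative_intros]:
  "(g has_real_derivative g') (at y within S) \<Longrightarrow> \<bar>g y\<bar> < 1 \<Longrightarrow>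
   ((\<lambda>x. QQ (g x)) has_real_derivative ell (g y) * g') (at y within S)"
  using DERIV_chain2[OF QQ_deriv] by blast

lemma PP_eq: "\<bar>y\<bar> < 1 \<Longrightarrow> PP y = - ln (1 - y^2)"
proof -
  assume "\<bar>y\<bar> < 1"
  then have "ln (1 - y^2) = ln ((1-y)*(1+y))" by (simp add: power2_eq_square algebra_simps)
  also have "\<dots> = ln (1-y) + ln (1+y)" using \<open>\<bar>y\<bar> < 1\<close> by (simp add: ln_mult abs_less_iff)
  finally show ?thesis unfolding PP_def by simp
qed

lemma one_minus_sq: assumes "\<bar>y\<bar> < (1::real)"
  shows "0 < 1 - y^2" "1 - y^2 \<noteq> 0" "y^2 \<noteq> 1" "y^2 < 1" "1 + y^4 - 2*y^2 \<noteq> 0" "0 < 1 + y^4 - 2*y^2"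
proof -
  show a: "0 < 1 - y^2" "y^2 < 1" using assms by (auto simp: abs_square_less_1)
  then show "1 - y^2 \<noteq> 0" "y^2 \<noteq> 1" by auto
  have "1 + y^4 - 2*y^2 = (1-y^2)^2" by (simp add: power2_eq_square power4_eq_xxxx algebra_simps)
  then show "0 < 1 + y^4 - 2*y^2" "1 + y^4 - 2*y^2 \<noteq> 0" using a by auto
qed

lemma ell_lower: assumes "0 \<le> x" "x < 1" shows "2*x \<le> ell x"
proof -
  have "(\<lambda>y. ell y - 2*y) 0 \<le> (\<lambda>y. ell y - 2*y) x"
  proof (rule mono_deriv[where f="\<lambda>y. ell y - 2*y"])
    fix y assume "0 \<le> y" "y \<le> x"
    then have "\<bar>y\<bar> < 1" using assms by auto
    then show "((\<lambda>y. ell y - 2*y) has_real_derivative 2/(1-y^2) - 2) (at y)"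
      apply (auto intro!: derivative_eq_intros)
      done
    have "1 - y^2 \<le> 1" "0 < 1 - y^2" using \<open>\<bar>y\<bar> < 1\<close> by (auto simp: abs_square_less_1)
    then have "1 \<le> 1/(1-y^2)" by (simp add: field_simps)
    then show "0 \<le> 2/(1-y^2) - 2" by simp
  qed (use assms in auto)
  then show ?thesis by (simp add: ell_def)
qed

lemma ell_upper: assumes "0 \<le> x" "x < 1" shows "ell x \<le> 2*x/(1-x^2)"
proof -
  have "(\<lambda>y. 2*y/(1-y^2) - ell y) 0 \<le> (\<lambda>y. 2*y/(1-y^2) - ell y) x"
  proof (rule mono_deriv[where f="\<lambda>y. 2*y/(1-y^2) - ell y"])
    fix y assume "0 \<le> y" "y \<le> x"
    then have y: "\<bar>y\<bar> < 1" using assms by auto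
    note ne = one_minus_sq[OF y]
    show "((\<lambda>y. 2*y/(1-y^2) - ell y) has_real_derivative 4*y^2/(1-y^2)^2) (at y)"
      apply (rule DERIV_cong)
       apply (use y ne in \<open>auto intro!: derivative_eq_intros\<close>)[1]
      using ne by (simp add: divide_simps, (simp add: power2_eq_square algebra_simps)?)
    show "0 \<le> 4*y^2/(1-y^2)^2" by simp
  qed (use assms in auto)
  then show ?thesis by (simp add: ell_def)
qed

lemma PP_lower: assumes "\<bar>x\<bar> < 1" shows "x^2 \<le> PP x"
proof -
  have "0 < 1 - x^2" using assms by (auto simp: abs_square_less_1)
  then have "ln (1 - x^2) \<le> (1-x^2) - 1" by (rule ln_le_minus_one)
  then show ?thesis using PP_eq[OF assms] by simp
qed

lemma PP_upper: assumes "\<bar>x\<bar> < 1" shows "PP x \<le> x^2/(1-x^2)"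
proof -
  have p: "0 < 1 - x^2" using assms by (auto simp: abs_square_less_1)
  then have "ln (1/(1 - x^2)) \<le> 1/(1-x^2) - 1" by (intro ln_le_minus_one) simp
  also have "1/(1-x^2) - 1 = x^2/(1-x^2)" using p by (simp add: field_simps)
  finally show ?thesis using PP_eq[OF assms] p by (simp add: ln_div)
qed

lemma QQ_lower: assumes "0 \<le> x" "x < 1" shows "x^2 \<le> QQ x"
proof -
  have "(\<lambda>y. QQ y - y^2) 0 \<le> (\<lambda>y. QQ y - y^2) x"
  proof (rule mono_deriv[where f="\<lambda>y. QQ y - y^2"])
    fix y assume "0 \<le> y" "y \<le> x"
    then have y: "\<bar>y\<bar> < 1" using assms by auto
    show "((\<lambda>y. QQ y - y^2) has_real_derivative ell y - 2*y) (at y)"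
      using y by (auto intro!: derivative_eq_intros)
    show "0 \<le> ell y - 2*y" using ell_lower[of y] \<open>0 \<le> y\<close> y by auto
  qed (use assms in auto)
  then show ?thesis by (simp add: QQ_def PP_def ell_def)
qed

lemma C5core: assumes "0 \<le> x" "x < 1" shows "x * ell x \<le> 2 * PP x"
proof -
  have "(\<lambda>y. 2 * PP y - y * ell y) 0 \<le> (\<lambda>y. 2 * PP y - y * ell y) x"
  proof (rule mono_deriv[where f="\<lambda>y. 2 * PP y - y * ell y"])
    fix y assume "0 \<le> y" "y \<le> x"
    then have y: "\<bar>y\<bar> < 1" using assms by auto
    note ne = one_minus_sq[OF y]
    show "((\<lambda>y. 2 * PP y - y * ell y) has_real_derivative 2*y/(1-y^2) - ell y) (at y)"
      apply (rule DERIV_cong)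
       apply (use y ne in \<open>auto intro!: derivative_eq_intros\<close>)[1]
      using ne by (simp add: divide_simps, (simp add: power2_eq_square algebra_simps)?)
    show "0 \<le> 2*y/(1-y^2) - ell y" using ell_upper[of y] \<open>0 \<le> y\<close> y by auto
  qed (use assms in auto)
  then show ?thesis by (simp add: PP_def ell_def)
qed

lemma ln_sq_bound: fixes r :: real assumes "1 \<le> r" shows "2 * ln r \<le> r - 1/r"
proof -
  have "(\<lambda>y. y - 1/y - 2 * ln y) 1 \<le> (\<lambda>y. y - 1/y - 2 * ln y) r"
  proof (rule mono_deriv[where f="\<lambda>y. y - 1/y - 2 * ln y"])
    fix y :: real assume "1 \<le> y" "y \<le> r"
    show "((\<lambda>y. y - 1/y - 2 * ln y) has_real_derivative (y-1)^2/y^2) (at y)"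
      using \<open>1 \<le> y\<close> by (auto intro!: derivative_eq_intros simp: field_simps power2_eq_square)
    show "0 \<le> (y-1)^2/y^2" by simp
  qed (use assms in auto)
  then show ?thesis by simp
qed

lemma C2core: assumes "0 < x" "x < 1" shows "PP x * (1-x^2)/x^2 \<le> sqrt (1-x^2)"
proof -
  have ax: "\<bar>x\<bar> < 1" using assms by auto
  note ne = one_minus_sq[OF ax]
  define s where "s = sqrt (1-x^2)"
  have s0: "0 < s" using ne by (simp add: s_def)
  have s1: "s < 1" using assms ne by (simp add: s_def)
  have ss: "s^2 = 1 - x^2" using ne by (simp add: s_def)
  have "PP x = - ln (s^2)" using PP_eq[OF ax] ss by simp
  also have "\<dots> = 2 * ln (1/s)" using s0 by (simp add: ln_div ln_realpow)
  also have "\<dots> \<le> 1/s - s" using ln_sq_bound[of "1/s"] s0 s1 by simp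
  also have "\<dots> = x^2/s" using s0 ss by (simp add: field_simps power2_eq_square)
  finally have "PP x \<le> x^2/s" .
  then have "PP x * (1-x^2)/x^2 \<le> x^2/s * (1-x^2) / x^2"
    using assms ne by (intro divide_right_mono mult_right_mono) auto
  also have "\<dots> = x^2/s * s^2 / x^2" using ss by simp
  also have "\<dots> = s" using assms s0 by (simp add: field_simps power2_eq_square)
  finally show ?thesis by (simp add: s_def)
qed

lemma C3K: assumes "0 \<le> x" "x < 1" shows "0 \<le> ell x + (x * PP x - 2*x)/sqrt(1-x^2)"
proof -
  have "(\<lambda>y. ell y + (y * PP y - 2*y)/sqrt(1-y^2)) 0 \<le> (\<lambda>y. ell y + (y * PP y - 2*y)/sqrt(1-y^2)) x"
  proof (rule mono_deriv[where f="\<lambda>y. ell y + (y * PP y - 2*y)/sqrt(1-y^2)"])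
    fix y assume "0 \<le> y" "y \<le> x"
    then have y: "\<bar>y\<bar> < 1" using assms by auto
    note ne = one_minus_sq[OF y]
    define s where "s = sqrt (1-y^2)"
    have s0: "0 < s" using ne by (simp add: s_def)
    have ss: "s^2 = 1 - y^2" using ne by (simp add: s_def)
    show "((\<lambda>y. ell y + (y * PP y - 2*y)/sqrt(1-y^2)) has_real_derivative (2*sqrt(1-y^2) + PP y + 2*y^2 - 2)/(sqrt(1-y^2))^3) (at y)"
      apply (rule DERIV_cong)
       apply (use y ne in \<open>auto intro!: derivative_eq_intros\<close>)[1]
      unfolding s_def[symmetric]
      using ne s0 by (simp add: divide_simps) (use ss in algebra)
    have "PP y = - 2 * ln s" using PP_eq[OF y] ss[symmetric] s0 by (simp add: ln_realpow)
    moreover have "ln s \<le> s - 1" using s0 by (rule ln_le_minus_one)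
    ultimately have "0 \<le> 2*s + PP y + 2*y^2 - 2" using zero_le_power2[of y] by linarith
    then show "0 \<le> (2*sqrt(1-y^2) + PP y + 2*y^2 - 2)/(sqrt(1-y^2))^3"
      using s0 by (simp add: s_def[symmetric])
  qed (use assms in auto)
  then show ?thesis by (simp add: PP_def ell_def)
qed



lemma C3core: assumes "0 \<le> x" "x < 1" shows "(1 + sqrt(1-x^2)) * PP x \<le> x * ell x"
proof -
  have "(\<lambda>y. y * ell y - (1 + sqrt(1-y^2)) * PP y) 0 \<le> (\<lambda>y. y * ell y - (1 + sqrt(1-y^2)) * PP y) x"
  proof (rule mono_deriv[where f="\<lambda>y. y * ell y - (1 + sqrt(1-y^2)) * PP y"])
    fix y assume "0 \<le> y" "y \<le> x"
    then have y: "\<bar>y\<bar> < 1" using assms by auto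
    note ne = one_minus_sq[OF y]
    define s where "s = sqrt (1-y^2)"
    have s0: "0 < s" using ne by (simp add: s_def)
    have ss: "s^2 = 1 - y^2" using ne by (simp add: s_def)
    show "((\<lambda>y. y * ell y - (1 + sqrt(1-y^2)) * PP y) has_real_derivative ell y + (y * PP y - 2*y)/sqrt(1-y^2)) (at y)"
      apply (rule DERIV_cong)
       apply (use y ne in \<open>auto intro!: derivative_eq_intros\<close>)[1]
      unfolding s_def[symmetric]
      using ne s0 by (simp add: divide_simps) (use ss in algebra)
    show "0 \<le> ell y + (y * PP y - 2*y)/sqrt(1-y^2)" using C3K[of y] \<open>0 \<le> y\<close> \<open>y \<le> x\<close> assms by auto
  qed (use assms in auto)
  then show ?thesis by (simp add: PP_def ell_def)
qed



lemma Laz: assumes "0 \<le> x" "x < 1" shows "ell x \<le> 2 * x * (1-x^2) powr (-1/3)"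
proof -
  have "(\<lambda>y. 2 * y * (1-y^2) powr (-1/3) - ell y) 0 \<le> (\<lambda>y. 2 * y * (1-y^2) powr (-1/3) - ell y) x"
  proof (rule mono_deriv[where f="\<lambda>y. 2 * y * (1-y^2) powr (-1/3) - ell y"])
    fix y assume "0 \<le> y" "y \<le> x"
    then have y: "\<bar>y\<bar> < 1" using assms by auto
    note ne = one_minus_sq[OF y]
    define m where "m = (1-y^2) powr (1/3)"
    have m0: "0 < m" using ne by (simp add: m_def)
    have m3: "m^3 = 1 - y^2"
    proof -
      have "m^3 = m powr (real 3)" using m0 by (simp only: powr_realpow)
      also have "\<dots> = (1-y^2) powr (1/3 * 3)" unfolding m_def by (simp add: powr_powr)
      also have "\<dots> = 1 - y^2" using ne by simp
      finally show ?thesis .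
    qed
    have e1: "(1-y^2) powr (-1/3) = 1/m" unfolding m_def
      by (simp add: powr_minus_divide)
    show "((\<lambda>y. 2 * y * (1-y^2) powr (-1/3) - ell y) has_real_derivative (2*(1-y^2) + 4*y^2/3 - 2*m)/m^4) (at y)"
    proof -
      have d1: "((\<lambda>y. 1 - y^2) has_real_derivative -(2*y)) (at y)"
        by (auto intro!: derivative_eq_intros)
      have d2: "((\<lambda>y. (1 - y^2) powr (-1/3)) has_real_derivative (-1/3) * (1-y^2) powr (-1/3 - of_nat 1) * (-(2*y))) (at y)"
        using DERIV_fun_powr[OF d1, of "-1/3"] ne(1) by simp
      have d3: "((\<lambda>y. 2*y) has_real_derivative 2) (at y)"
        by (auto intro!: derivative_eq_intros)
      note d = DERIV_diff[OF DERIV_mult[OF d3 d2] ell_deriv[OF y]]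
      have e2: "(1-y^2) powr (-1/3 - of_nat 1) = 1/m^4"
      proof -
        have "(1-y^2) powr (-1/3 - of_nat 1) = (1-y^2) powr (-1/3) / (1-y^2) powr 1"
          using powr_diff[of "1-y^2" "-1/3" "of_nat 1"] by (simp only: of_nat_1)
        also have "\<dots> = (1/m) / m^3" using e1 m3 ne by simp
        finally show ?thesis by (simp add: power_eq_if)
      qed
      show ?thesis
        apply (rule DERIV_cong[OF d])
        unfolding e1 e2 using m0 ne m3
        by (simp add: divide_simps) (use m3 in algebra)
    qed
    have mb: "m \<le> 1 - y^2/3"
    proof (rule ccontr)
      assume "\<not> ?thesis"
      then have h: "1 - y^2/3 < m" by simp
      have "0 \<le> 1 - y^2/3" using ne by simp
      then have "(1 - y^2/3)^3 < m^3" using h by (intro power_strict_mono) auto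
      moreover have "1 - y^2 \<le> (1 - y^2/3)^3"
      proof -
        have "(1 - y^2/3)^3 - (1 - y^2) = y^4 * (9 - y^2) / 27"
          by algebra
        also have "\<dots> \<ge> 0" using ne by simp
        finally show ?thesis by simp
      qed
      ultimately show False using m3 by simp
    qed
    show "0 \<le> (2*(1-y^2) + 4*y^2/3 - 2*m)/m^4"
      using mb m0 by simp
  qed (use assms in auto)
  then show ?thesis by (simp add: ell_def)
qed

lemma Laz3: assumes "0 \<le> x" "x < 1" shows "(ell x)^3 \<le> 8*x^3/(1-x^2)"
proof -
  have ax: "\<bar>x\<bar> < 1" using assms by auto
  note ne = one_minus_sq[OF ax]
  define c where "c = (1-x^2) powr (-1/3)"
  have c0: "0 < c" using ne by (simp add: c_def)
  have c3: "c^3 = 1/(1-x^2)"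
  proof -
    have "c^3 = c powr (real 3)" using c0 by (simp only: powr_realpow)
    also have "\<dots> = (1-x^2) powr (-1/3 * 3)" unfolding c_def by (simp add: powr_powr)
    also have "\<dots> = (1-x^2) powr (- 1)" by simp
    also have "\<dots> = 1/(1-x^2)" using ne by (simp add: powr_minus_divide)
    finally show ?thesis .
  qed
  have "0 \<le> ell x" using ell_lower[OF assms] assms by linarith
  then have "(ell x)^3 \<le> (2*x*c)^3" using Laz[OF assms] by (intro power_mono) (auto simp: c_def)
  also have "\<dots> = 8*x^3/(1-x^2)" using c3 by (simp add: power_mult_distrib)
  finally show ?thesis .
qed

lemma eps_nonneg: fixes v K d :: real
  assumes "0 < d" "0 \<le> K" "\<And>e. 0 < e \<Longrightarrow> e \<le> d \<Longrightarrow> -(K*e) \<le> v" shows "0 \<le> v"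
proof (rule ccontr)
  assume "\<not> 0 \<le> v"
  then have v: "v < 0" by simp
  define e where "e = min d (-v/(K+1))"
  have "0 < -v/(K+1)" using v assms by (intro divide_pos_pos) auto
  then have e0: "0 < e" using assms by (simp add: e_def)
  have ed: "e \<le> d" by (simp add: e_def)
  have "K*e \<le> K*(-v/(K+1))" using assms by (intro mult_left_mono) (auto simp: e_def)
  also have "\<dots> < -v" using v assms by (simp add: field_simps)
  finally have "v < -(K*e)" by simp
  with assms(3)[OF e0 ed] show False by simp
qed

lemma C4core: assumes "0 < x" "x < 1" shows "x * (ell x)^2 \<le> PP x * (ell x + 2*x)"
proof -
  define F where "F = (\<lambda>y. PP y - y * (ell y)^2 / (ell y + 2*y))"
  have "0 \<le> F x"
  proof (rule eps_nonneg[where d="min x (1/2)" and K=4])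
    fix e assume e: "0 < e" "e \<le> min x (1/2)"
    have ae: "\<bar>e\<bar> < 1" using e by auto
    note nee = one_minus_sq[OF ae]
    have "F e \<le> F x"
      unfolding F_def
    proof (rule mono_deriv[where f="\<lambda>y. PP y - y * (ell y)^2 / (ell y + 2*y)"])
      fix y assume "e \<le> y" "y \<le> x"
      then have y: "\<bar>y\<bar> < 1" "0 < y" using assms e by auto
      note ne = one_minus_sq[OF y(1)]
      have lp: "0 < ell y + 2*y" using ell_lower[of y] y by auto
      show "((\<lambda>y. PP y - y * (ell y)^2 / (ell y + 2*y)) has_real_derivative
             (8*y^3/(1-y^2) - (ell y)^3)/(ell y + 2*y)^2) (at y)"
        apply (rule DERIV_cong)
         apply (use y ne lp in \<open>auto intro!: derivative_eq_intros\<close>)[1]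
        using ne lp by (simp add: divide_simps, (simp add: power2_eq_square power3_eq_cube algebra_simps)?)
      show "0 \<le> (8*y^3/(1-y^2) - (ell y)^3)/(ell y + 2*y)^2"
        using Laz3[of y] y by simp
    qed (use e in auto)
    moreover have "- (4*e) \<le> F e"
    proof -
      have l0: "0 \<le> ell e" using ell_lower[of e] e by auto
      have lu: "ell e \<le> 2*e/(1-e^2)" using ell_upper[of e] e by auto
      have "e^2 \<le> (1/2)^2" using e by (intro power_mono) auto
      then have "2*e/(1-e^2) \<le> 2*e/(3/4)"
        using e nee by (intro divide_left_mono) (auto simp: power2_eq_square)
      then have lu2: "ell e \<le> 8/3*e" using lu by simp
      have "(ell e)^2 / (ell e + 2*e) \<le> ell e"
        using l0 e by (simp add: divide_simps power2_eq_square) (intro mult_left_mono, auto)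
      then have "(ell e)^2 / (ell e + 2*e) \<le> 8/3*e" using lu2 by linarith
      then have "e * ((ell e)^2 / (ell e + 2*e)) \<le> e * (8/3*e)"
        using e by (intro mult_left_mono) auto
      moreover have "e * (8/3*e) \<le> 4*e" using e by (simp add: mult_mono)
      moreover have "0 \<le> PP e" using PP_lower[OF ae] by (meson order.trans zero_le_power2)
      moreover have "F e = PP e - e * ((ell e)^2 / (ell e + 2*e))" by (simp add: F_def)
      ultimately show ?thesis by linarith
    qed
    ultimately show "-(4*e) \<le> F x" by simp
  qed (use assms in auto)
  then have "x * (ell x)^2 / (ell x + 2*x) \<le> PP x" by (simp add: F_def)
  moreover have "0 < ell x + 2*x" using ell_lower[of x] assms by auto
  ultimately show ?thesis by (simp add: divide_simps mult.commute)
qed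

lemma C6core: assumes "0 < x" "x < 1" shows "ln (x^2 / QQ x) \<le> ell x / (2*x) - PP x / 2 - 1"
proof -
  define G where "G = (\<lambda>y. ell y / (2*y) - PP y / 2 - 1 + ln (QQ y / y^2))"
  have "0 \<le> G x"
  proof (rule eps_nonneg[where d="min x (1/2)" and K=1])
    fix e assume e: "0 < e" "e \<le> min x (1/2)"
    have ae: "\<bar>e\<bar> < 1" using e by auto
    note nee = one_minus_sq[OF ae]
    have "G e \<le> G x"
      unfolding G_def
    proof (rule mono_deriv[where f="\<lambda>y. ell y / (2*y) - PP y / 2 - 1 + ln (QQ y / y^2)"])
      fix y assume "e \<le> y" "y \<le> x"
      then have y: "\<bar>y\<bar> < 1" "0 < y" using assms e by auto
      note ne = one_minus_sq[OF y(1)]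
      have "0 < y^2" using y by simp
      then have qp: "0 < QQ y" using QQ_lower[of y] y by linarith
      have qp2: "0 < y * ell y - PP y" using qp by (simp add: QQ_def)
      have qy: "0 < QQ y / y^2" using qp y by simp
      have dd: "((\<lambda>y. ell y / (2*y) - PP y / 2 - 1 + ln (QQ y / y^2)) has_real_derivative
             (4 * y / (1 - y^2) - ell y * 2) / (4 * (y * y)) - 4 * y / (4 - y^2 * 4) +
              y^2 * (ell y * y^2 - QQ y * (2 * y)) / (QQ y * y ^ 4)) (at y)"
        apply (rule DERIV_cong)
         apply (use y ne qy in \<open>auto intro!: derivative_eq_intros\<close>)[1]
        using ne qp y by simp
      define w where "w = 1/(1-y^2)"
      have w1: "4 * y / (1 - y^2) = 4*y*w" by (simp add: w_def)
      have w2: "4 * y / (4 - y^2 * 4) = y*w" unfolding w_def using ne by (simp add: field_simps)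
      have wr: "w * (1-y^2) = 1" unfolding w_def using ne by simp
      have "(4*y*w - ell y * 2) / (4 * (y * y)) - y*w + y^2 * (ell y * y^2 - QQ y * (2 * y)) / (QQ y * y ^ 4)
          = (PP y * (ell y + 2*y) - y * (ell y)^2) / (2 * y^2 * QQ y)"
        using y qp by (simp add: field_simps) (use wr QQ_def[of y] in algebra)
      then show "((\<lambda>y. ell y / (2*y) - PP y / 2 - 1 + ln (QQ y / y^2)) has_real_derivative
             (PP y * (ell y + 2*y) - y * (ell y)^2) / (2 * y^2 * QQ y)) (at y)"
        using dd unfolding w1 w2 by simp
      show "0 \<le> (PP y * (ell y + 2*y) - y * (ell y)^2) / (2 * y^2 * QQ y)"
        using C4core[of y] y qp by simp
    qed (use e in auto)
    moreover have "- (1*e) \<le> G e"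
    proof -
      have l1: "1 \<le> ell e / (2*e)" using ell_lower[of e] e by simp
      have "e^2 \<le> QQ e" using QQ_lower[of e] e by simp
      then have "1 \<le> QQ e / e^2" using e by simp
      then have l2: "0 \<le> ln (QQ e / e^2)" by simp
      have "e^2 \<le> (1/2)^2" using e by (intro power_mono) auto
      then have "e^2/(1-e^2) \<le> e^2/(3/4)"
        using nee by (intro divide_left_mono) (auto simp: power_divide)
      then have "PP e \<le> e^2/(3/4)" using PP_upper[OF ae] by linarith
      moreover have "e^2/(3/4) \<le> 2*e" using e by (simp add: power2_eq_square)
      ultimately have "PP e / 2 \<le> e" by simp
      then show ?thesis using l1 l2 by (simp add: G_def)
    qed
    ultimately show "-(1*e) \<le> G x" by simp
  qed (use assms in auto)
  moreover have "ln (x^2 / QQ x) = - ln (QQ x / x^2)"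
  proof -
    have "0 < x^2" using assms by simp
    then have "0 < QQ x" using QQ_lower[of x] assms by linarith
    then show ?thesis using assms by (simp add: ln_div)
  qed
  ultimately show ?thesis by (simp add: G_def)
qed

lemma ident_eq: assumes "0 < a" "0 < b" "a \<noteq> b"
  shows "ident_mean a b = exp ((b * ln b - a * ln a)/(b-a) - 1)"
proof -
  have "(b powr b)/(a powr a) = exp (b * ln b - a * ln a)"
    using assms by (simp add: powr_def exp_diff)
  then have "((b powr b)/(a powr a)) powr (1/(b-a)) = exp ((b * ln b - a * ln a)/(b-a))"
    by (simp add: powr_def)
  then show ?thesis using assms by (simp add: ident_mean_def exp_diff)
qed

lemma main_lt:
  fixes a b :: real
  assumes "0 < a" "a < b"
  shows "harm_mean a b \<le> lam_m1 a b \<and> lam_m1 a b \<le> geom_mean a b \<and>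
         geom_mean a b \<le> lam_0 a b \<and> lam_0 a b \<le> log_mean a b \<and>
         log_mean a b \<le> lam_1 a b \<and> lam_1 a b \<le> ident_mean a b"
proof -
  define A where "A = (a+b)/2"
  define x where "x = (b-a)/(b+a)"
  have b0: "0 < b" using assms by simp
  have A0: "0 < A" using assms by (simp add: A_def)
  have x0: "0 < x" "x < 1" using assms by (auto simp: x_def field_simps)
  have ax: "\<bar>x\<bar> < 1" using x0 by auto
  note ne = one_minus_sq[OF ax]
  have xp: "1 + x = b / A" using assms by (simp add: x_def A_def field_simps)
  have xm: "1 - x = a / A" using assms by (simp add: x_def A_def field_simps)
  have lnp: "ln (1+x) = ln b - ln A" using xp A0 b0 by (simp add: ln_div)
  have lnm: "ln (1-x) = ln a - ln A" using xm A0 assms by (simp add: ln_div)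
  have ellx: "ell x = ln b - ln a" by (simp add: ell_def lnp lnm)
  have PPx: "PP x = 2 * ln ((a+b)/2) - ln a - ln b" by (simp add: PP_def lnp lnm A_def)
  have QQx: "A * QQ x = a * ln a + b * ln b - (a + b) * ln ((a + b) / 2)"
    unfolding QQ_def ellx PPx using assms unfolding x_def A_def by (simp add: field_simps)
  have Pp: "0 < PP x" using PP_lower[OF ax] x0 by (smt (verit) zero_less_power)
  have lp: "0 < ell x" using ell_lower[of x] x0 by simp
  have Qp: "0 < QQ x" using QQ_lower[of x] x0 by (smt (verit) zero_less_power)
  have ab: "a \<noteq> b" using assms by simp
  define c where "c = a + b"
  have c0: "0 < c" using assms by (simp add: c_def)
  have Ac: "A = c/2" by (simp add: A_def c_def)
  have xc: "x = (b-a)/c" by (simp add: x_def c_def add.commute)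
  have Ax: "A*x = (b-a)/2" unfolding Ac xc using c0 by simp
  have x2: "1 - x^2 = 4*a*b/c^2"
  proof -
    have "1 - x^2 = (c^2 - (b-a)^2)/c^2" unfolding xc using c0
      by (simp only: power_divide) (simp add: divide_simps)
    also have "c^2 - (b-a)^2 = 4*a*b" by (simp add: c_def power2_eq_square algebra_simps)
    finally show ?thesis by simp
  qed
  have e_h: "harm_mean a b = A * (1 - x^2)"
  proof -
    have "harm_mean a b = 2*a*b/c" unfolding harm_mean_def c_def using assms
      by (simp add: field_simps inverse_eq_divide)
    also have "\<dots> = c/2 * (4*a*b/c^2)" using c0 by (simp add: power2_eq_square field_simps)
    finally show ?thesis by (simp add: Ac x2)
  qed
  have e_m1: "lam_m1 a b = A * (PP x * (1-x^2)/x^2)"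
  proof -
    have "1 / (2 * a) + 1 / (2 * b) - 2 / (a + b) = (b-a)^2/(2*a*b*c)"
      unfolding c_def using assms by (simp add: field_simps power2_eq_square)
    also have "\<dots> = x^2/(A*(1-x^2))"
    proof -
      have h: "A*(1-x^2) = 2*a*b/c" unfolding Ac x2 using c0 by (simp add: power2_eq_square field_simps)
      have h2: "x^2 = (b-a)^2/c^2" by (simp add: xc power_divide)
      show ?thesis unfolding h unfolding h2 using c0 assms by (simp add: field_simps power2_eq_square)
    qed
    finally have "1 / (2 * a) + 1 / (2 * b) - 2 / (a + b) = x^2/(A*(1-x^2))" .
    then have "lam_m1 a b = PP x / (x^2/(A*(1-x^2)))" using ab by (simp add: lam_m1_def PPx)
    also have "\<dots> = A * (PP x * (1-x^2)/x^2)" using A0 ne x0 by (simp add: field_simps)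
    finally show ?thesis .
  qed
  have e_g: "geom_mean a b = A * sqrt (1-x^2)"
  proof -
    have "a * b = (A * sqrt (1-x^2))^2" using ne A0 unfolding x2 Ac using c0
      by (simp add: power_mult_distrib field_simps power2_eq_square)
    then show ?thesis unfolding geom_mean_def using A0 ne by simp
  qed
  have e_0: "lam_0 a b = A * (QQ x / PP x)"
    unfolding lam_0_def using ab QQx[symmetric] PPx[symmetric] by simp
  have e_L: "log_mean a b = A * (2*x / ell x)"
  proof -
    have "log_mean a b = (b-a) / ell x" unfolding log_mean_def using ab by (simp add: ellx)
    also have "\<dots> = A * (2*x / ell x)"
    proof -
      have "A*x = (b-a)/2" unfolding Ac xc using c0 by simp
      then have "b - a = 2*(A*x)" by simp
      then show ?thesis by simp
    qed
    finally show ?thesis .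
  qed
  have e_1: "lam_1 a b = A * (x^2 / QQ x)"
  proof -
    have "(b-a)^2 = 4 * A^2 * x^2"
    proof -
      have "4 * A^2 * x^2 = (2*(A*x))^2" by (simp add: power_mult_distrib)
      moreover have "2*(A*x) = b - a" using Ax by simp
      ultimately show ?thesis by simp
    qed
    then show ?thesis unfolding lam_1_def using ab QQx[symmetric] A0 Qp
      by (simp add: field_simps power2_eq_square)
  qed
  have e_I: "ident_mean a b = A * exp (ell x / (2*x) - PP x / 2 - 1)"
  proof -
    have "(b * ln b - a * ln a)/(b-a) - 1 = ln A + (ell x / (2*x) - PP x / 2 - 1)"
      unfolding ellx PPx using assms unfolding x_def A_def by (simp add: field_simps)
    then have "ident_mean a b = exp (ln A + (ell x / (2*x) - PP x / 2 - 1))"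
      using ident_eq[OF assms(1) b0 ab] by (simp add: algebra_simps)
    also have "\<dots> = A * exp (ell x / (2*x) - PP x / 2 - 1)" using A0 by (simp only: exp_add exp_ln)
    finally show ?thesis .
  qed
  have c1: "1 - x^2 \<le> PP x * (1-x^2)/x^2"
  proof -
    have "x^2 * (1-x^2) \<le> PP x * (1-x^2)" using PP_lower[OF ax] ne by (intro mult_right_mono) auto
    then show ?thesis using x0 by (simp add: field_simps)
  qed
  have c2: "PP x * (1-x^2)/x^2 \<le> sqrt (1-x^2)" by (rule C2core[OF x0])
  have c3: "sqrt (1-x^2) \<le> QQ x / PP x"
  proof -
    have "(1 + sqrt(1-x^2)) * PP x \<le> x * ell x" using C3core[of x] x0 by simp
    then have "sqrt (1-x^2) * PP x \<le> QQ x" by (simp add: QQ_def algebra_simps)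
    then show ?thesis using Pp by (simp add: field_simps)
  qed
  have c4: "QQ x / PP x \<le> 2*x / ell x"
  proof -
    have "x * (ell x)^2 \<le> PP x * (ell x + 2*x)" by (rule C4core[OF x0])
    then have "QQ x * ell x \<le> 2*x * PP x" by (simp add: QQ_def algebra_simps power2_eq_square)
    then show ?thesis using Pp lp by (simp add: field_simps)
  qed
  have c5: "2*x / ell x \<le> x^2 / QQ x"
  proof -
    have "x * ell x \<le> 2 * PP x" using C5core[of x] x0 by simp
    then have "2 * x * QQ x \<le> x^2 * ell x" using x0
      by (simp add: QQ_def algebra_simps power2_eq_square)
    then show ?thesis using Qp lp by (simp add: field_simps)
  qed
  have c6: "x^2 / QQ x \<le> exp (ell x / (2*x) - PP x / 2 - 1)"
  proof -
    have "x^2 / QQ x = exp (ln (x^2 / QQ x))" using x0 Qp by simp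
    also have "\<dots> \<le> exp (ell x / (2*x) - PP x / 2 - 1)" using C6core[OF x0] by simp
    finally show ?thesis .
  qed
  show ?thesis unfolding e_h e_m1 e_g e_0 e_L e_1 e_I
    by (intro conjI mult_left_mono c1 c2 c3 c4 c5 c6 less_imp_le[OF A0])
qed

lemma sym_all:
  fixes a b :: real
  assumes "0 < a" "0 < b"
  shows "harm_mean a b = harm_mean b a" "lam_m1 a b = lam_m1 b a" "geom_mean a b = geom_mean b a"
    "lam_0 a b = lam_0 b a" "log_mean a b = log_mean b a" "lam_1 a b = lam_1 b a"
    "ident_mean a b = ident_mean b a"
proof -
  show "harm_mean a b = harm_mean b a" by (simp add: harm_mean_def add.commute)
  show "lam_m1 a b = lam_m1 b a" by (simp add: lam_m1_def add.commute algebra_simps)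
  show "geom_mean a b = geom_mean b a" by (simp add: geom_mean_def mult.commute)
  show "lam_0 a b = lam_0 b a" by (simp add: lam_0_def add.commute algebra_simps)
  show "log_mean a b = log_mean b a" unfolding log_mean_def by (metis minus_diff_eq minus_divide_divide)
  show "lam_1 a b = lam_1 b a" by (simp add: lam_1_def add.commute algebra_simps power2_commute)
  show "ident_mean a b = ident_mean b a"
  proof (cases "a = b")
    case False
    then show ?thesis using ident_eq[OF assms False] ident_eq[OF assms(2,1)] False
      by (simp add: field_simps)
  qed simp
qed

theorem mainTheorem15:
  fixes a b :: real
  assumes "a > 0" and "b > 0"
  shows "harm_mean a b \<le> lam_m1 a b \<and> lam_m1 a b \<le> geom_mean a b \<and>
         geom_mean a b \<le> lam_0 a b \<and> lam_0 a b \<le> log_mean a b \<and>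
         log_mean a b \<le> lam_1 a b \<and> lam_1 a b \<le> ident_mean a b"
proof -
  consider "a < b" | "a = b" | "b < a" by linarith
  then show ?thesis
  proof cases
    case 1 then show ?thesis using main_lt assms by blast
  next
    case 2
    have "harm_mean a a = a" using assms by (simp add: harm_mean_def)
    moreover have "geom_mean a a = a" using assms by (simp add: geom_mean_def)
    ultimately show ?thesis using 2
      by (simp add: lam_m1_def lam_0_def lam_1_def log_mean_def ident_mean_def)
  next
    case 3
    then show ?thesis using main_lt[OF assms(2) 3] sym_all[OF assms] by simp
  qed
qed

end
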